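(* Let $ABC$ be a nondegenerate triangle and let $P$ be its incenter or one of its excenters. If $XYZ$ is a Miquel triangle of $P$ relative to $ABC$, then $P$ is the circumcenter of $XYZ$.
   Context: Miquel triangle: given a triangle $ABC$ and a point $P$ not on the lines $BC,CA,AB$, a triangle $XYZ$ with $X$ on line $BC$, $Y$ on line $CA$, $Z$ on line $AB$ is called a Miquel triangle of $P$ relative to $ABC$ if $P$ lies on each of the three circles through $A,Y,Z$, through $B,Z,X$, and through $C,X,Y$. *)

theory Defs
  imports "HOL-Analysis.Analysis"
begin

definition on_line :: "complex \<Rightarrow> complex \<Rightarrow> complex \<Rightarrow> bool" where
  "on_line P U V \<longleftrightarrow> P \<in> affine hull {U, V}"

definition on_circle_through :: "complex \<Rightarrow> complex \<Rightarrow> complex \<Rightarrow> complex \<Rightarrow> bool" where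
  "on_circle_through P U V W \<longleftrightarrow>
     \<not> collinear {U, V, W} \<and>
     (\<exists>Q. dist Q U = dist Q V \<and> dist Q U = dist Q W \<and> dist Q U = dist Q P)"

(* incenter and the three excenters (barycentric formulas, a,b,c the side lengths) *)
definition incenter :: "complex \<Rightarrow> complex \<Rightarrow> complex \<Rightarrow> complex" where
  "incenter A B C =
     (let a = dist B C; b = dist C A; c = dist A B
      in (1 / (a + b + c)) *\<^sub>R (a *\<^sub>R A + b *\<^sub>R B + c *\<^sub>R C))"

definition excenter_A :: "complex \<Rightarrow> complex \<Rightarrow> complex \<Rightarrow> complex" where
  "excenter_A A B C =
     (let a = dist B C; b = dist C A; c = dist A B
      in (1 / (- a + b + c)) *\<^sub>R ((- a) *\<^sub>R A + b *\<^sub>R B + c *\<^sub>R C))"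

definition excenter_B :: "complex \<Rightarrow> complex \<Rightarrow> complex \<Rightarrow> complex" where
  "excenter_B A B C =
     (let a = dist B C; b = dist C A; c = dist A B
      in (1 / (a - b + c)) *\<^sub>R (a *\<^sub>R A + (- b) *\<^sub>R B + c *\<^sub>R C))"

definition excenter_C :: "complex \<Rightarrow> complex \<Rightarrow> complex \<Rightarrow> complex" where
  "excenter_C A B C =
     (let a = dist B C; b = dist C A; c = dist A B
      in (1 / (a + b - c)) *\<^sub>R (a *\<^sub>R A + b *\<^sub>R B + (- c) *\<^sub>R C))"

definition miquel_triangle ::
  "complex \<Rightarrow> complex \<Rightarrow> complex \<Rightarrow> complex \<Rightarrow> complex \<Rightarrow> complex \<Rightarrow> complex \<Rightarrow> bool" where
  "miquel_triangle A B C P X Y Z \<longleftrightarrow>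
     \<not> on_line P B C \<and> \<not> on_line P C A \<and> \<not> on_line P A B \<and>
     \<not> collinear {X, Y, Z} \<and>
     on_line X B C \<and> on_line Y C A \<and> on_line Z A B \<and>
     on_circle_through P A Y Z \<and> on_circle_through P B Z X \<and> on_circle_through P C X Y"

definition is_circumcenter :: "complex \<Rightarrow> complex \<Rightarrow> complex \<Rightarrow> complex \<Rightarrow> bool" where
  "is_circumcenter Q X Y Z \<longleftrightarrow> \<not> collinear {X, Y, Z} \<and> dist Q X = dist Q Y \<and> dist Q Y = dist Q Z"

end

theory Submission imports Defs begin

lemma tri_strict:
  fixes A B C :: complex
  assumes "\<not> collinear {A, B, C}"
  shows "dist B C < dist C A + dist A B"
proof -
  have le: "dist B C \<le> dist B A + dist A C" by (rule dist_triangle)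
  have "dist B C \<noteq> dist B A + dist A C"
  proof
    assume "dist B C = dist B A + dist A C"
    then have "norm ((B - A) + (A - C)) = norm (B - A) + norm (A - C)"
      by (simp add: dist_norm)
    then have "collinear {0, B - A, A - C}" by (rule norm_triangle_eq_imp_collinear)
    then have "B - A = 0 \<or> A - C = 0 \<or> (\<exists>c. A - C = c *\<^sub>R (B - A))"
      by (simp add: collinear_lemma)
    then have "B - A = 0 \<or> C - A = 0 \<or> (\<exists>c. C - A = c *\<^sub>R (B - A))"
    proof (elim disjE exE)
      fix c assume "A - C = c *\<^sub>R (B - A)"
      then have "C - A = (- c) *\<^sub>R (B - A)" by (metis minus_diff_eq scaleR_minus_left)
      then show ?thesis by blast
    qed auto
    then have "collinear {0, B - A, C - A}" by (simp add: collinear_lemma)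
    then have "collinear {B, A, C}" by (subst collinear_3) simp_all
    then have "collinear {A, B, C}" by (simp add: insert_commute)
    with assms show False by simp
  qed
  with le show ?thesis by (simp add: dist_commute)
qed

lemma core:
  fixes u v m :: complex and t t' k \<beta> \<gamma> :: real
  assumes hb: "\<beta>^2 = (norm v)^2" and hc: "\<gamma>^2 = (norm u)^2"
    and hb0: "\<beta> \<noteq> 0" and hc0: "\<gamma> \<noteq> 0"
    and ht: "t \<noteq> 0" and ht': "t' \<noteq> 0" and hk: "k \<noteq> 0"
    and hy: "(norm (t *\<^sub>R v))^2 = 2 * inner (t *\<^sub>R v) m"
    and hz: "(norm (t' *\<^sub>R u))^2 = 2 * inner (t' *\<^sub>R u) m"
    and hp: "(norm (k *\<^sub>R (\<beta> *\<^sub>R u + \<gamma> *\<^sub>R v)))^2 = 2 * inner (k *\<^sub>R (\<beta> *\<^sub>R u + \<gamma> *\<^sub>R v)) m"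
  shows "norm (k *\<^sub>R (\<beta> *\<^sub>R u + \<gamma> *\<^sub>R v) - t *\<^sub>R v) = norm (k *\<^sub>R (\<beta> *\<^sub>R u + \<gamma> *\<^sub>R v) - t' *\<^sub>R u)"
proof -
  define uu where "uu = inner u u"
  define vv where "vv = inner v v"
  define uv where "uv = inner u v"
  define um where "um = inner u m"
  define vm where "vm = inner v m"
  have vv: "vv = \<beta>^2" using hb by (simp add: vv_def power2_norm_eq_inner)
  have uu: "uu = \<gamma>^2" using hc by (simp add: uu_def power2_norm_eq_inner)
  have "t * t * vv = t * (2 * vm)" using hy unfolding power2_norm_eq_inner
    by (simp add: vv_def vm_def)
  with ht have e1: "t * vv = 2 * vm" by simp
  have "t' * t' * uu = t' * (2 * um)" using hz unfolding power2_norm_eq_inner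
    by (simp add: uu_def um_def)
  with ht' have e2: "t' * uu = 2 * um" by simp
  have "k * k * (\<beta> * \<beta> * uu + \<gamma> * \<gamma> * vv + 2 * \<beta> * \<gamma> * uv) = k * (2 * (\<beta> * um + \<gamma> * vm))"
    using hp unfolding power2_norm_eq_inner
    by (simp add: uu_def um_def vv_def vm_def uv_def inner_add_left inner_add_right
          inner_commute[of v u] algebra_simps)
  with hk have e3: "k * (\<beta> * \<beta> * uu + \<gamma> * \<gamma> * vv + 2 * \<beta> * \<gamma> * uv) = 2 * (\<beta> * um + \<gamma> * vm)"
    by simp
  define W where "W = \<beta> * \<gamma> + uv"
  have "\<beta> * \<beta> * uu + \<gamma> * \<gamma> * vv + 2 * \<beta> * \<gamma> * uv = 2 * (\<beta> * \<gamma>) * W"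
    using uu vv by (simp add: W_def power2_eq_square algebra_simps)
  moreover have "2 * (\<beta> * um + \<gamma> * vm) = (\<beta> * \<gamma>) * (\<gamma> * t' + \<beta> * t)"
    using e1 e2 uu vv by (simp add: power2_eq_square algebra_simps)
  ultimately have "(\<beta> * \<gamma>) * (2 * k * W) = (\<beta> * \<gamma>) * (\<gamma> * t' + \<beta> * t)"
    using e3 by (simp add: algebra_simps)
  with hb0 hc0 have kW: "2 * k * W = \<gamma> * t' + \<beta> * t" by simp
  define S where "S = k * k * (\<beta> * \<beta> * uu + \<gamma> * \<gamma> * vv + 2 * \<beta> * \<gamma> * uv)"
  have L: "(norm (k *\<^sub>R (\<beta> *\<^sub>R u + \<gamma> *\<^sub>R v) - t *\<^sub>R v))^2 =
       S - 2 * t * k * (\<beta> * uv + \<gamma> * vv) + t * t * vv"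
    unfolding power2_norm_eq_inner S_def
    by (simp add: uu_def vv_def uv_def inner_add_left inner_add_right inner_diff_left inner_diff_right
          inner_commute[of v u] algebra_simps)
  have R: "(norm (k *\<^sub>R (\<beta> *\<^sub>R u + \<gamma> *\<^sub>R v) - t' *\<^sub>R u))^2 =
       S - 2 * t' * k * (\<beta> * uu + \<gamma> * uv) + t' * t' * uu"
    unfolding power2_norm_eq_inner S_def
    by (simp add: uu_def vv_def uv_def inner_add_left inner_add_right inner_diff_left inner_diff_right
          inner_commute[of v u] algebra_simps)
  have a1: "2 * t * k * (\<beta> * uv + \<gamma> * vv) = t * \<beta> * (2 * k * W)"
    using vv by (simp add: W_def power2_eq_square algebra_simps)
  have a2: "2 * t' * k * (\<beta> * uu + \<gamma> * uv) = t' * \<gamma> * (2 * k * W)"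
    using uu by (simp add: W_def power2_eq_square algebra_simps)
  have "(norm (k *\<^sub>R (\<beta> *\<^sub>R u + \<gamma> *\<^sub>R v) - t *\<^sub>R v))^2 = (norm (k *\<^sub>R (\<beta> *\<^sub>R u + \<gamma> *\<^sub>R v) - t' *\<^sub>R u))^2"
    unfolding L R a1 a2 kW using uu vv by (simp add: power2_eq_square algebra_simps)
  then show ?thesis by (simp add: power2_eq_iff_nonneg)
qed


lemma circ_eq:
  fixes Q A W :: complex
  assumes "dist Q W = dist Q A"
  shows "(norm (W - A))^2 = 2 * inner (W - A) (Q - A)"
proof -
  have "(norm ((W - A) - (Q - A)))^2 = (norm (Q - A))^2"
    using assms by (simp add: dist_norm norm_minus_commute)
  then show ?thesis unfolding power2_norm_eq_inner
    by (simp add: inner_diff_left inner_diff_right inner_commute[of Q A] inner_commute[of Q W] inner_commute[of W A] algebra_simps)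
qed

lemma rep_gen:
  fixes A B C :: complex and a b c S :: real
  assumes "S = a + b + c" "S \<noteq> 0"
  shows "(1 / S) *\<^sub>R (a *\<^sub>R A + b *\<^sub>R B + c *\<^sub>R C) - A = (1 / S) *\<^sub>R (b *\<^sub>R (B - A) + c *\<^sub>R (C - A))"
proof -
  have S: "complex_of_real S \<noteq> 0" using assms(2) by simp
  show ?thesis using S unfolding assms(1) scaleR_conv_of_real
    by (simp add: field_simps)
qed

lemma P_rep:
  fixes A B C P :: complex
  assumes nc: "\<not> collinear {A, B, C}"
    and hP: "P \<in> {incenter A B C, excenter_A A B C, excenter_B A B C, excenter_C A B C}"
  shows "\<exists>k \<beta> \<gamma>. P - A = k *\<^sub>R (\<beta> *\<^sub>R (B - A) + \<gamma> *\<^sub>R (C - A)) \<and>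
           \<beta>^2 = (norm (C - A))^2 \<and> \<gamma>^2 = (norm (B - A))^2 \<and> \<beta> \<noteq> 0 \<and> \<gamma> \<noteq> 0"
proof -
  define a where "a = dist B C"
  define b where "b = dist C A"
  define c where "c = dist A B"
  have nc2: "\<not> collinear {B, C, A}" "\<not> collinear {C, A, B}" using nc by (simp_all add: insert_commute)
  have t1: "a < b + c" using tri_strict[OF nc] by (simp add: a_def b_def c_def)
  have t2: "b < c + a" using tri_strict[OF nc2(1)] by (simp add: a_def b_def c_def)
  have t3: "c < a + b" using tri_strict[OF nc2(2)] by (simp add: a_def b_def c_def)
  have AC: "A \<noteq> C" and AB: "A \<noteq> B" using nc by (auto simp: collinear_2 insert_commute)
  have a0: "a \<ge> 0" by (simp add: a_def)
  have b0: "b > 0" using AC by (simp add: b_def)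
  have c0: "c > 0" using AB by (simp add: c_def)
  have nb: "b = norm (C - A)" by (simp add: b_def dist_norm)
  have nc': "c = norm (B - A)" by (simp add: c_def dist_norm norm_minus_commute)
  have "P = incenter A B C \<or> P = excenter_A A B C \<or> P = excenter_B A B C \<or> P = excenter_C A B C"
    using hP by simp
  then show ?thesis
  proof (elim disjE)
    assume "P = incenter A B C"
    then have "P - A = (1 / (a + b + c)) *\<^sub>R (b *\<^sub>R (B - A) + c *\<^sub>R (C - A))"
      unfolding incenter_def Let_def a_def[symmetric] b_def[symmetric] c_def[symmetric]
      using rep_gen[of "a + b + c" a b c A B C] a0 b0 c0 by simp
    then show ?thesis using b0 c0 nb nc' by (intro exI[of _ "1 / (a + b + c)"] exI[of _ b] exI[of _ c]) auto
  next
    assume "P = excenter_A A B C"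
    then have "P - A = (1 / (- a + b + c)) *\<^sub>R (b *\<^sub>R (B - A) + c *\<^sub>R (C - A))"
      unfolding excenter_A_def Let_def a_def[symmetric] b_def[symmetric] c_def[symmetric]
      using rep_gen[of "- a + b + c" "- a" b c A B C] t1 by simp
    then show ?thesis using b0 c0 nb nc' by (intro exI[of _ "1 / (- a + b + c)"] exI[of _ b] exI[of _ c]) auto
  next
    assume "P = excenter_B A B C"
    then have "P - A = (1 / (a - b + c)) *\<^sub>R ((- b) *\<^sub>R (B - A) + c *\<^sub>R (C - A))"
      unfolding excenter_B_def Let_def a_def[symmetric] b_def[symmetric] c_def[symmetric]
      using rep_gen[of "a - b + c" a "- b" c A B C] t2 by simp
    then show ?thesis using b0 c0 nb nc' by (intro exI[of _ "1 / (a - b + c)"] exI[of _ "- b"] exI[of _ c]) auto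
  next
    assume "P = excenter_C A B C"
    then have "P - A = (1 / (a + b - c)) *\<^sub>R (b *\<^sub>R (B - A) + (- c) *\<^sub>R (C - A))"
      unfolding excenter_C_def Let_def a_def[symmetric] b_def[symmetric] c_def[symmetric]
      using rep_gen[of "a + b - c" a b "- c" A B C] t3 by simp
    then show ?thesis using b0 c0 nb nc' by (intro exI[of _ "1 / (a + b - c)"] exI[of _ b] exI[of _ "- c"]) auto
  qed
qed


lemma vertex:
  fixes A B C P Y Z :: complex
  assumes nc: "\<not> collinear {A, B, C}"
    and hP: "P \<in> {incenter A B C, excenter_A A B C, excenter_B A B C, excenter_C A B C}"
    and PA: "P \<noteq> A"
    and hY: "on_line Y C A" and hZ: "on_line Z A B"
    and circ: "on_circle_through P A Y Z"
  shows "dist P Y = dist P Z"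
proof -
  obtain k \<beta> \<gamma> where rep: "P - A = k *\<^sub>R (\<beta> *\<^sub>R (B - A) + \<gamma> *\<^sub>R (C - A))"
    and hb: "\<beta>^2 = (norm (C - A))^2" and hc: "\<gamma>^2 = (norm (B - A))^2"
    and hb0: "\<beta> \<noteq> 0" and hc0: "\<gamma> \<noteq> 0"
    using P_rep[OF nc hP] by blast
  have k0: "k \<noteq> 0" using rep PA by auto
  have ncAYZ: "\<not> collinear {A, Y, Z}" and
    "\<exists>Q. dist Q A = dist Q Y \<and> dist Q A = dist Q Z \<and> dist Q A = dist Q P"
    using circ by (auto simp: on_circle_through_def)
  then obtain Q where q1: "dist Q Y = dist Q A" and q2: "dist Q Z = dist Q A" and q3: "dist Q P = dist Q A"
    by metis
  have YA: "Y \<noteq> A" and ZA: "Z \<noteq> A" using ncAYZ by (auto simp: collinear_2 insert_commute)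
  obtain s r where sr: "Y = s *\<^sub>R C + r *\<^sub>R A" "s + r = 1"
    using hY by (auto simp: on_line_def affine_hull_2)
  have y: "Y - A = s *\<^sub>R (C - A)"
    using sr by (simp add: algebra_simps scaleR_add_left[symmetric] del: scaleR_add_left)
  obtain s' r' where sr': "Z = s' *\<^sub>R A + r' *\<^sub>R B" "s' + r' = 1"
    using hZ by (auto simp: on_line_def affine_hull_2)
  have z: "Z - A = r' *\<^sub>R (B - A)"
    using sr' by (simp add: algebra_simps scaleR_add_left[symmetric] del: scaleR_add_left)
  have s0: "s \<noteq> 0" using y YA by auto
  have r0: "r' \<noteq> 0" using z ZA by auto
  have "norm ((P - A) - (Y - A)) = norm ((P - A) - (Z - A))"
    unfolding rep y z
    by (rule core[OF hb hc hb0 hc0 s0 r0 k0, of "Q - A"])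
      (use circ_eq[OF q1] circ_eq[OF q2] circ_eq[OF q3] rep y z in simp_all)
  then show ?thesis by (simp add: dist_norm)
qed

lemma rotate_set:
  fixes A B C P :: complex
  assumes "P \<in> {incenter A B C, excenter_A A B C, excenter_B A B C, excenter_C A B C}"
  shows "P \<in> {incenter B C A, excenter_A B C A, excenter_B B C A, excenter_C B C A}"
proof -
  have "incenter A B C = incenter B C A"
    by (simp add: incenter_def Let_def dist_commute algebra_simps)
  moreover have "excenter_A A B C = excenter_C B C A"
    by (simp add: excenter_A_def excenter_C_def Let_def dist_commute algebra_simps)
  moreover have "excenter_B A B C = excenter_A B C A"
    by (simp add: excenter_A_def excenter_B_def Let_def dist_commute algebra_simps)
  moreover have "excenter_C A B C = excenter_B B C A"
    by (simp add: excenter_C_def excenter_B_def Let_def dist_commute algebra_simps)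
  ultimately show ?thesis using assms by auto
qed

theorem theorem7:
  fixes A B C P X Y Z :: complex
  assumes "\<not> collinear {A, B, C}"
    and "P \<in> {incenter A B C, excenter_A A B C, excenter_B A B C, excenter_C A B C}"
    and "miquel_triangle A B C P X Y Z"
  shows "is_circumcenter P X Y Z"
proof -
  note m = assms(3)[unfolded miquel_triangle_def]
  have PA: "P \<noteq> A" using m by (auto simp: on_line_def hull_inc)
  have PB: "P \<noteq> B" using m by (auto simp: on_line_def hull_inc)
  have nc2: "\<not> collinear {B, C, A}" using assms(1) by (simp add: insert_commute)
  have 1: "dist P Y = dist P Z"
    by (rule vertex[OF assms(1) assms(2) PA]) (use m in auto)
  have 2: "dist P Z = dist P X"
    by (rule vertex[OF nc2 rotate_set[OF assms(2)] PB]) (use m in auto)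
  show ?thesis unfolding is_circumcenter_def using m 1 2 by simp
qed

end
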